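(* If $(S,K,I)$ is a split graph and $C$ is an induced cycle in the factor graph $\Phi(S)$, then $|C|\neq 5$.
   Context: A split graph $(S,K,I)$ is a graph $S$ together with a fixed partition $V(S)=K\dot\cup I$, where $K$ is a clique and $I$ is an independent set. For a vertex $v$ of $S$, $N_v$ denotes its open neighborhood in $S$ and $d_v=|N_v|$; $\eta_{uv}=|N_u\cap N_v|$. The factor graph $\Phi(S)$ is the loopless multigraph with vertex set $I$ in which, for distinct $u,v\in I$, there is one edge joining $u$ and $v$ for each 2-switch of $S$ acting on $u$ and $v$ (a 2-switch replaces edges $ab,cd$ with $ac,bd$ when $ab,cd\in E(S)$ and $ac,bd\notin E(S)$); equivalently, the multiplicity of $uv$ is $\sigma_{uv}=(d_u-\eta_{uv})(d_v-\eta_{uv})$, and $u,v$ are adjacent iff $\sigma_{uv}>0$. An induced cycle $C=v_1\ldots v_nv_1$ ($n\geq 3$) in $\Phi(S)$ consists of distinct vertices with $v_iv_{i+1}$ and $v_nv_1$ adjacent and no other pair adjacent (multiplicities ignored); $|C|=n$. *)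

theory Defs
  imports Main
begin

definition simple_graph :: "'a set \<Rightarrow> ('a \<Rightarrow> 'a \<Rightarrow> bool) \<Rightarrow> bool" where
  "simple_graph V E \<longleftrightarrow> finite V \<and> (\<forall>x y. E x y \<longrightarrow> x \<in> V \<and> y \<in> V)
     \<and> (\<forall>x y. E x y \<longrightarrow> E y x) \<and> (\<forall>x. \<not> E x x)"

definition split_graph :: "'a set \<Rightarrow> ('a \<Rightarrow> 'a \<Rightarrow> bool) \<Rightarrow> 'a set \<Rightarrow> 'a set \<Rightarrow> bool" where
  "split_graph V E K I \<longleftrightarrow> simple_graph V E \<and> V = K \<union> I \<and> K \<inter> I = {}
     \<and> (\<forall>x\<in>K. \<forall>y\<in>K. x \<noteq> y \<longrightarrow> E x y)
     \<and> (\<forall>x\<in>I. \<forall>y\<in>I. \<not> E x y)"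

definition nbhd :: "'a set \<Rightarrow> ('a \<Rightarrow> 'a \<Rightarrow> bool) \<Rightarrow> 'a \<Rightarrow> 'a set" where
  "nbhd V E v = {w \<in> V. E v w}"

definition deg :: "'a set \<Rightarrow> ('a \<Rightarrow> 'a \<Rightarrow> bool) \<Rightarrow> 'a \<Rightarrow> nat" where
  "deg V E v = card (nbhd V E v)"

definition eta :: "'a set \<Rightarrow> ('a \<Rightarrow> 'a \<Rightarrow> bool) \<Rightarrow> 'a \<Rightarrow> 'a \<Rightarrow> nat" where
  "eta V E u v = card (nbhd V E u \<inter> nbhd V E v)"

text \<open>Multiplicity of the edge uv in the factor graph.\<close>
definition sigma :: "'a set \<Rightarrow> ('a \<Rightarrow> 'a \<Rightarrow> bool) \<Rightarrow> 'a \<Rightarrow> 'a \<Rightarrow> nat" where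
  "sigma V E u v = (deg V E u - eta V E u v) * (deg V E v - eta V E u v)"

text \<open>Adjacency in the factor graph \<Phi>(S) (vertex set I, loopless;
multiplicities ignored).\<close>
definition factor_adj :: "'a set \<Rightarrow> ('a \<Rightarrow> 'a \<Rightarrow> bool) \<Rightarrow> 'a set \<Rightarrow> 'a \<Rightarrow> 'a \<Rightarrow> bool" where
  "factor_adj V E I u v \<longleftrightarrow> u \<in> I \<and> v \<in> I \<and> u \<noteq> v \<and> sigma V E u v > 0"

definition induced_cycle :: "'a set \<Rightarrow> ('a \<Rightarrow> 'a \<Rightarrow> bool) \<Rightarrow> 'a list \<Rightarrow> bool" where
  "induced_cycle W adj cs \<longleftrightarrow> length cs \<ge> 3 \<and> distinct cs \<and> set cs \<subseteq> W
     \<and> (\<forall>i<length cs. \<forall>j<length cs. i \<noteq> j \<longrightarrow>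
          (adj (cs ! i) (cs ! j) \<longleftrightarrow>
             j = Suc i mod length cs \<or> i = Suc j mod length cs))"

end

theory Submission
  imports Defs
begin

lemma no_c5:
  fixes A0 A1 A2 A3 A4 :: "'b set"
  assumes "A0 \<subseteq> A2 \<or> A2 \<subseteq> A0" "A2 \<subseteq> A4 \<or> A4 \<subseteq> A2" "A4 \<subseteq> A1 \<or> A1 \<subseteq> A4"
    "A1 \<subseteq> A3 \<or> A3 \<subseteq> A1" "A3 \<subseteq> A0 \<or> A0 \<subseteq> A3"
    "\<not> (A0 \<subseteq> A1 \<or> A1 \<subseteq> A0)" "\<not> (A1 \<subseteq> A2 \<or> A2 \<subseteq> A1)" "\<not> (A2 \<subseteq> A3 \<or> A3 \<subseteq> A2)"
    "\<not> (A3 \<subseteq> A4 \<or> A4 \<subseteq> A3)" "\<not> (A4 \<subseteq> A0 \<or> A0 \<subseteq> A4)"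
  shows False
  using assms by (metis subset_trans)

lemma adj_iff:
  assumes "simple_graph V E"
  shows "factor_adj V E I u v \<longleftrightarrow> u \<in> I \<and> v \<in> I \<and> u \<noteq> v \<and>
     \<not> nbhd V E u \<subseteq> nbhd V E v \<and> \<not> nbhd V E v \<subseteq> nbhd V E u"
proof -
  have f: "finite (nbhd V E w)" for w using assms unfolding simple_graph_def nbhd_def by auto
  have a: "deg V E u - eta V E u v = card (nbhd V E u - nbhd V E v)"
    unfolding deg_def eta_def using f by (simp add: card_Diff_subset_Int)
  have b: "deg V E v - eta V E u v = card (nbhd V E v - nbhd V E u)"
    unfolding deg_def eta_def using f by (simp add: card_Diff_subset_Int Int_commute)
  have c: "0 < card (X - Y) \<longleftrightarrow> \<not> X \<subseteq> Y" if "finite X" for X Y :: "'a set"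
    using that by (auto simp: card_gt_0_iff)
  show ?thesis unfolding factor_adj_def sigma_def a b using c[OF f] by auto
qed

theorem lemma3p2:
  fixes V K I :: "'a set" and E :: "'a \<Rightarrow> 'a \<Rightarrow> bool" and C :: "'a list"
  assumes "split_graph V E K I"
    and "induced_cycle I (factor_adj V E I) C"
  shows "length C \<noteq> 5"
proof
  assume L: "length C = 5"
  have sg: "simple_graph V E" using assms(1) unfolding split_graph_def by auto
  have D: "distinct C" and S: "set C \<subseteq> I" and
    R: "\<And>i j. i < 5 \<Longrightarrow> j < 5 \<Longrightarrow> i \<noteq> j \<Longrightarrow>
       (factor_adj V E I (C ! i) (C ! j) \<longleftrightarrow> j = Suc i mod 5 \<or> i = Suc j mod 5)"
    using assms(2) L unfolding induced_cycle_def by auto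
  define A where "A i = nbhd V E (C ! i)" for i
  have mem: "C ! i \<in> I" if "i < 5" for i using S L that nth_mem by (metis subsetD)
  have ne: "C ! i \<noteq> C ! j" if "i < 5" "j < 5" "i \<noteq> j" for i j
    using D L that by (simp add: nth_eq_iff_index_eq)
  have K: "(\<not> A i \<subseteq> A j \<and> \<not> A j \<subseteq> A i) \<longleftrightarrow> j = Suc i mod 5 \<or> i = Suc j mod 5"
    if "i < 5" "j < 5" "i \<noteq> j" for i j
    using R[OF that] adj_iff[OF sg, of I "C ! i" "C ! j"] mem ne that unfolding A_def by auto
  show False
    apply (rule no_c5[of "A 0" "A 2" "A 4" "A 1" "A 3"])
    using K[of 0 2] K[of 2 4] K[of 4 1] K[of 1 3] K[of 3 0]
      K[of 0 1] K[of 1 2] K[of 2 3] K[of 3 4] K[of 4 0] by auto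
qed

end
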